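(* For every integer $n\ge2$, \[ Q_n(x)=\sum_{j=0}^{\lfloor n/2\rfloor}Y(n-j,j)(1+x)^j=\sum_{j=0}^{\lfloor n/2\rfloor}\left(\binom{n-j}{j}+\binom{n-j-1}{j-1}\right)(1+x)^j . \]
   Context: For $n\ge1$ let $\Xi_n$ be the poset on $\{x_1,\dots,x_n\}$ whose cover relations are exactly: $x_2\prec x_1$, $x_3\prec x_2$, and for $3\le i\le n-1$, $x_i\prec x_{i+1}$ if $i$ is odd and $x_{i+1}\prec x_i$ if $i$ is even (so $x_1>x_2>x_3<x_4>x_5<\cdots$). A filter of a poset is an up-closed subset. The matchable Lucas cube $\Omega_n$ is the graph whose vertices are the filters of $\Xi_n$, two filters adjacent iff one is obtained from the other by deleting a single element. $q_{n,k}$ denotes the number of induced subgraphs of $\Omega_n$ isomorphic to the $k$-dimensional hypercube, and $Q_n(x)=\sum_{k\ge0}q_{n,k}x^k$. The Lucas triangle is $Y(n,k)=\binom nk+\binom{n-1}{k-1}$ for $0\le k\le n$ (binomial coefficients with negative lower index are $0$ except that $\binom{-1}{-1}=1$). *)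

theory Defs
  imports Main "HOL-Computational_Algebra.Formal_Power_Series"
begin

text \<open>Cover relations of the poset Xi_n on the elements 1..n (element i stands for x_i).
  A pair (a,b) means x_a is covered by x_b, i.e. x_a \<prec> x_b.\<close>
definition xi_cover :: "nat \<Rightarrow> (nat \<times> nat) set" where
  "xi_cover n =
     {(2,1) | _::unit. 2 \<le> n} \<union> {(3,2) | _::unit. 3 \<le> n}
     \<union> {(i, i+1) | i. 3 \<le> i \<and> i \<le> n - 1 \<and> odd i}
     \<union> {(i+1, i) | i. 3 \<le> i \<and> i \<le> n - 1 \<and> even i}"

definition xi_le :: "nat \<Rightarrow> nat \<Rightarrow> nat \<Rightarrow> bool" where
  "xi_le n a b \<longleftrightarrow> (a, b) \<in> (xi_cover n)\<^sup>*"

definition is_filter :: "nat \<Rightarrow> nat set \<Rightarrow> bool" where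
  "is_filter n F \<longleftrightarrow> F \<subseteq> {1..n} \<and> (\<forall>a\<in>F. \<forall>b\<in>{1..n}. xi_le n a b \<longrightarrow> b \<in> F)"

definition filters :: "nat \<Rightarrow> nat set set" where
  "filters n = {F. is_filter n F}"

text \<open>Two sets are adjacent iff one is obtained from the other by deleting a single element.
  This is the adjacency of Omega_n on filters, and also of the hypercube on Pow {..<k}.\<close>
definition set_adj :: "'a set \<Rightarrow> 'a set \<Rightarrow> bool" where
  "set_adj F G \<longleftrightarrow> (\<exists>x\<in>F. G = F - {x}) \<or> (\<exists>x\<in>G. F = G - {x})"

definition induces_cube :: "nat \<Rightarrow> nat \<Rightarrow> nat set set \<Rightarrow> bool" where
  "induces_cube n k S \<longleftrightarrow> S \<subseteq> filters n \<and>
     (\<exists>f. bij_betw f (Pow {..<k}) S \<and>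
          (\<forall>A\<in>Pow {..<k}. \<forall>B\<in>Pow {..<k}. set_adj A B \<longleftrightarrow> set_adj (f A) (f B)))"

definition q :: "nat \<Rightarrow> nat \<Rightarrow> nat" where
  "q n k = card {S. induces_cube n k S}"

text \<open>Q_n(x) as a formal power series (it is in fact a polynomial).\<close>
definition Qser :: "nat \<Rightarrow> nat fps" where
  "Qser n = Abs_fps (\<lambda>k. of_nat (q n k))"

definition binom :: "int \<Rightarrow> int \<Rightarrow> nat" where
  "binom a b = (if b < 0 then (if a = -1 \<and> b = -1 then 1 else 0)
                else if a < 0 then 0 else nat a choose nat b)"

definition Y :: "nat \<Rightarrow> nat \<Rightarrow> nat" where
  "Y m k = binom (int m) (int k) + binom (int m - 1) (int k - 1)"

end

theory Submission
  imports Defs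
begin

definition sd :: "'a set \<Rightarrow> 'a set \<Rightarrow> 'a set" where
  "sd X V = (X - V) \<union> (V - X)"

lemma sd_assoc: "sd (sd X V) Z = sd X (sd V Z)" unfolding sd_def by auto
lemma sd_comm: "sd X V = sd V X" unfolding sd_def by auto
lemma sd_self[simp]: "sd X X = {}" unfolding sd_def by auto
lemma sd_empty[simp]: "sd X {} = X" "sd {} X = X" unfolding sd_def by auto
lemma sd_eq: "sd X V = D \<longleftrightarrow> V = sd X D" unfolding sd_def by auto
lemma sd_cancel: "sd Z P = sd Z Q \<longleftrightarrow> P = Q" unfolding sd_def by auto

lemma set_adj_sd: "set_adj X V \<longleftrightarrow> (\<exists>u. sd X V = {u})"
proof
  assume "set_adj X V"
  then consider x where "x \<in> X" "V = X - {x}" | x where "x \<in> V" "X = V - {x}"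
    unfolding set_adj_def by blast
  then show "\<exists>u. sd X V = {u}" by cases (auto simp: sd_def)
next
  assume "\<exists>u. sd X V = {u}"
  then obtain u where u0: "sd X V = {u}" by blast
  have u: "z \<in> sd X V \<longleftrightarrow> z = u" for z using u0 by simp
  show "set_adj X V"
  proof (cases "u \<in> X")
    case True
    have "V = X - {u}"
    proof (rule set_eqI)
      fix z show "z \<in> V \<longleftrightarrow> z \<in> X - {u}" using u[of z] u[of u] True unfolding sd_def by auto
    qed
    then show ?thesis using True unfolding set_adj_def by blast
  next
    case False
    have "X = V - {u}"
    proof (rule set_eqI)
      fix z show "z \<in> X \<longleftrightarrow> z \<in> V - {u}" using u[of z] u[of u] False unfolding sd_def by auto
    qed
    moreover have "u \<in> V" using u[of u] False unfolding sd_def by auto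
    ultimately show ?thesis unfolding set_adj_def by blast
  qed
qed

lemma cube_struct:
  assumes fin: "finite K" and inj: "inj_on f (Pow K)"
    and adj: "\<And>A B. A \<subseteq> K \<Longrightarrow> B \<subseteq> K \<Longrightarrow> set_adj A B \<Longrightarrow> set_adj (f A) (f B)"
  shows "\<exists>l. inj_on l K \<and> (\<forall>A. A \<subseteq> K \<longrightarrow> f A = sd (f {}) (l ` A))"
proof -
  define l where "l i = (SOME u. sd (f {}) (f {i}) = {u})" for i
  have hl: "sd (f {}) (f {i}) = {l i}" if "i \<in> K" for i
  proof -
    have "set_adj {} {i}" unfolding set_adj_def by auto
    then have "\<exists>u. sd (f {}) (f {i}) = {u}" using adj[of "{}" "{i}"] that set_adj_sd by auto
    then show ?thesis unfolding l_def by (rule someI_ex)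
  qed
  have fi: "f {i} = sd (f {}) {l i}" if "i \<in> K" for i using hl[OF that, unfolded sd_eq] .
  have injl: "inj_on l K"
  proof (rule inj_onI)
    fix i j assume "i \<in> K" "j \<in> K" "l i = l j"
    then have "f {i} = f {j}" using fi[of i] fi[of j] by simp
    then have "{i} = {j}" using inj_onD[OF inj] \<open>i \<in> K\<close> \<open>j \<in> K\<close> by blast
    then show "i = j" by simp
  qed
  have main: "A \<subseteq> K \<longrightarrow> f A = sd (f {}) (l ` A)" for A
  proof (induction "card A" arbitrary: A rule: less_induct)
    case less
    show ?case
    proof
      assume AK: "A \<subseteq> K"
      have finA: "finite A" using AK fin finite_subset by blast
      show "f A = sd (f {}) (l ` A)"
      proof (cases "\<exists>i j. i \<in> A \<and> j \<in> A \<and> i \<noteq> j")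
        case False
        then have "A = {} \<or> (\<exists>i. A = {i})" by blast
        then show ?thesis using fi AK by auto
      next
        case True
        then obtain i j where ij: "i \<in> A" "j \<in> A" "i \<noteq> j" by blast
        have c1: "card (A - {i}) < card A" using finA ij by (intro card_Diff1_less)
        have c2: "card (A - {j}) < card A" using finA ij by (intro card_Diff1_less)
        have "A - {i,j} \<subset> A" using ij by blast
        then have c3: "card (A - {i,j}) < card A" using finA by (rule psubset_card_mono[rotated])
        define Z0 where "Z0 = f {}"
        define W where "W = l ` (A - {i,j})"
        define Z where "Z = sd Z0 W"
        have lij: "l i \<noteq> l j" using injl ij AK by (auto dest: inj_onD)
        have lW: "l i \<notin> W" "l j \<notin> W" unfolding W_def using injl ij AK
          by (auto dest: inj_onD)
        have fZ: "f (A - {i,j}) = Z" using less[OF c3] AK unfolding Z_def W_def Z0_def by auto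
        have "l ` (A - {i}) = insert (l j) W" unfolding W_def using ij by auto
        also have "insert (l j) W = sd W {l j}" using lW unfolding sd_def by auto
        finally have "f (A - {i}) = sd Z0 (sd W {l j})"
          using less[OF c1] AK unfolding Z0_def by auto
        then have fAi: "f (A - {i}) = sd Z {l j}" unfolding Z_def by (simp only: sd_assoc)
        have "l ` (A - {j}) = insert (l i) W" unfolding W_def using ij by auto
        also have "insert (l i) W = sd W {l i}" using lW unfolding sd_def by auto
        finally have "f (A - {j}) = sd Z0 (sd W {l i})"
          using less[OF c2] AK unfolding Z0_def by auto
        then have fAj: "f (A - {j}) = sd Z {l i}" unfolding Z_def by (simp only: sd_assoc)
        have "set_adj (A - {i}) A" unfolding set_adj_def using ij by blast
        then have "set_adj (f (A - {i})) (f A)" using adj[of "A - {i}" A] AK by auto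
        then obtain u where u: "sd (f (A - {i})) (f A) = {u}"
          unfolding set_adj_sd by blast
        have "set_adj (A - {j}) A" unfolding set_adj_def using ij by blast
        then have "set_adj (f (A - {j})) (f A)" using adj[of "A - {j}" A] AK by auto
        then obtain v where v: "sd (f (A - {j})) (f A) = {v}"
          unfolding set_adj_sd by blast
        have eu: "f A = sd Z (sd {l j} {u})" using u[unfolded sd_eq] fAi by (simp add: sd_assoc)
        have ev: "f A = sd Z (sd {l i} {v})" using v[unfolded sd_eq] fAj by (simp add: sd_assoc)
        have "sd Z (sd {l j} {u}) = sd Z (sd {l i} {v})" using eu ev by simp
        then have uv: "sd {l j} {u} = sd {l i} {v}" by (simp only: sd_cancel)
        have "u \<noteq> l j"
        proof
          assume "u = l j"
          then have "f A = f (A - {i,j})" using eu fZ by simp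
          then have "A = A - {i,j}" using inj_onD[OF inj] AK by blast
          then show False using ij by blast
        qed
        then have "l j \<in> sd {l j} {u}" unfolding sd_def by simp
        then have "l j \<in> sd {l i} {v}" using uv by simp
        then have vj: "v = l j" using lij unfolding sd_def by auto
        have "sd {l j} {u} = {l j, u}" using \<open>u \<noteq> l j\<close> unfolding sd_def by auto
        moreover have "sd {l i} {v} = {l i, l j}" using vj lij unfolding sd_def by auto
        ultimately have "{l j, u} = {l i, l j}" using uv by simp
        then have "u = l i" using \<open>u \<noteq> l j\<close> by (metis doubleton_eq_iff)
        moreover have "sd {l j} {l i} = {l i, l j}" using lij unfolding sd_def by auto
        ultimately have fA: "f A = sd Z {l i, l j}" using eu by simp
        have "l ` A = W \<union> {l i, l j}" unfolding W_def using ij by auto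
        then have "sd W {l i, l j} = l ` A" using lW unfolding sd_def by auto
        then show ?thesis using fA unfolding Z_def Z0_def by (simp add: sd_assoc)
      qed
    qed
  qed
  show ?thesis using injl main by blast
qed

lemma cover_iff: "(a,b) \<in> xi_cover n \<longleftrightarrow>
   (a = 2 \<and> b = 1 \<and> 2 \<le> n) \<or> (a = 3 \<and> b = 2 \<and> 3 \<le> n) \<or>
   (odd a \<and> 3 \<le> a \<and> b = a + 1 \<and> a + 1 \<le> n) \<or> (odd a \<and> 5 \<le> a \<and> a = b + 1 \<and> a \<le> n)"
proof
  assume "(a,b) \<in> xi_cover n"
  then show "(a = 2 \<and> b = 1 \<and> 2 \<le> n) \<or> (a = 3 \<and> b = 2 \<and> 3 \<le> n) \<or>
   (odd a \<and> 3 \<le> a \<and> b = a + 1 \<and> a + 1 \<le> n) \<or> (odd a \<and> 5 \<le> a \<and> a = b + 1 \<and> a \<le> n)"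
    unfolding xi_cover_def
    by (elim UnE; clarsimp; presburger)
next
  assume "(a = 2 \<and> b = 1 \<and> 2 \<le> n) \<or> (a = 3 \<and> b = 2 \<and> 3 \<le> n) \<or>
   (odd a \<and> 3 \<le> a \<and> b = a + 1 \<and> a + 1 \<le> n) \<or> (odd a \<and> 5 \<le> a \<and> a = b + 1 \<and> a \<le> n)"
  then show "(a,b) \<in> xi_cover n"
    unfolding xi_cover_def
    by (elim disjE; clarsimp; presburger)
qed

lemma cover_tgt: "(a,b) \<in> xi_cover n \<Longrightarrow> b = 1 \<or> b = 2 \<or> (even b \<and> 4 \<le> b)"
  unfolding cover_iff by presburger

lemma cover_src: "(a,b) \<in> xi_cover n \<Longrightarrow> a = 2 \<or> a = 3 \<or> (odd a \<and> 5 \<le> a)"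
  unfolding cover_iff by presburger

lemma cover_range: "(a,b) \<in> xi_cover n \<Longrightarrow> a \<in> {1..n} \<and> b \<in> {1..n} \<and> a \<noteq> b"
  unfolding cover_iff by auto

definition hr :: "nat \<Rightarrow> nat" where
  "hr a = (if a = 1 then 2 else if a = 2 then 1 else if a = 3 then 0 else if even a then 1 else 0)"

lemma cover_hr: "(a,b) \<in> xi_cover n \<Longrightarrow> hr a < hr b"
  unfolding cover_iff hr_def by auto

lemma trancl_hr: "(a,b) \<in> (xi_cover n)\<^sup>+ \<Longrightarrow> hr a < hr b"
  by (induction rule: trancl_induct) (auto dest: cover_hr)

lemma trancl_char: "(a,b) \<in> (xi_cover n)\<^sup>+ \<Longrightarrow> (a,b) \<in> xi_cover n \<or> (a = 3 \<and> b = 1)"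
proof (induction rule: trancl_induct)
  case (base y) then show ?case by simp
next
  case (step y z)
  show ?case
  proof (cases "a = 3 \<and> y = 1")
    case True
    then show ?thesis using step(2) cover_src by fastforce
  next
    case False
    then have ay: "(a,y) \<in> xi_cover n" using step(3) by blast
    have "y = 2" using cover_tgt[OF ay] cover_src[OF step(2)] by presburger
    then have "a = 3" "z = 1" using ay step(2) unfolding cover_iff by auto
    then show ?thesis by simp
  qed
qed

lemma xi_le_neq: "xi_le n a b \<Longrightarrow> a \<noteq> b \<Longrightarrow> (a,b) \<in> (xi_cover n)\<^sup>+"
  unfolding xi_le_def by (simp add: rtrancl_eq_or_trancl)

lemma xi_le_refl: "xi_le n a a" unfolding xi_le_def by simp

lemma xi_le_trans: "xi_le n a b \<Longrightarrow> xi_le n b c \<Longrightarrow> xi_le n a c"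
  unfolding xi_le_def by simp

lemma xi_le_hr: "xi_le n a b \<Longrightarrow> a \<noteq> b \<Longrightarrow> hr a < hr b"
  using xi_le_neq trancl_hr by blast

lemma xi_le_antisym: "xi_le n a b \<Longrightarrow> xi_le n b a \<Longrightarrow> a = b"
proof (rule ccontr)
  assume "xi_le n a b" "xi_le n b a" "a \<noteq> b"
  then have "hr a < hr b" "hr b < hr a" using xi_le_hr by auto
  then show False by simp
qed

lemma cover_le: "(a,b) \<in> xi_cover n \<Longrightarrow> xi_le n a b"
  unfolding xi_le_def by simp

lemma comparable_iff:
  assumes "a \<in> {1..n}" "b \<in> {1..n}" "a \<noteq> b"
  shows "(xi_le n a b \<or> xi_le n b a) \<longleftrightarrow> (a = b + 1 \<or> b = a + 1 \<or> (a = 1 \<and> b = 3) \<or> (a = 3 \<and> b = 1))"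
proof
  assume "xi_le n a b \<or> xi_le n b a"
  then have "(a,b) \<in> xi_cover n \<or> (a = 3 \<and> b = 1) \<or> (b,a) \<in> xi_cover n \<or> (b = 3 \<and> a = 1)"
    using xi_le_neq trancl_char assms(3) by metis
  then show "a = b + 1 \<or> b = a + 1 \<or> (a = 1 \<and> b = 3) \<or> (a = 3 \<and> b = 1)"
    unfolding cover_iff by auto
next
  have cons: "xi_le n c (c+1) \<or> xi_le n (c+1) c" if "1 \<le> c" "c + 1 \<le> n" for c
  proof -
    have "(c, c+1) \<in> xi_cover n \<or> (c+1, c) \<in> xi_cover n"
      unfolding cover_iff using that by presburger
    then show ?thesis using cover_le by blast
  qed
  assume "a = b + 1 \<or> b = a + 1 \<or> (a = 1 \<and> b = 3) \<or> (a = 3 \<and> b = 1)"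
  then consider "a = b + 1" | "b = a + 1" | "a = 1 \<and> b = 3" | "a = 3 \<and> b = 1" by blast
  then show "xi_le n a b \<or> xi_le n b a"
  proof cases
    case 1 then show ?thesis using cons[of b] assms by auto
  next
    case 2 then show ?thesis using cons[of a] assms by auto
  next
    case 3
    have "xi_le n 3 1" using assms 3 xi_le_trans[OF cover_le[of 3 2 n] cover_le[of 2 1 n]]
      unfolding cover_iff by auto
    then show ?thesis using 3 by simp
  next
    case 4
    have "xi_le n 3 1" using assms 4 xi_le_trans[OF cover_le[of 3 2 n] cover_le[of 2 1 n]]
      unfolding cover_iff by auto
    then show ?thesis using 4 by simp
  qed
qed

definition mins :: "nat \<Rightarrow> nat set \<Rightarrow> nat set" where
  "mins n F = {a \<in> F. F - {a} \<in> filters n}"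

lemma filters_sub: "filters n \<subseteq> Pow {1..n}"
  unfolding filters_def is_filter_def by auto

lemma finite_filters: "finite (filters n)"
  using filters_sub finite_subset by blast

lemma filter_sub: "F \<in> filters n \<Longrightarrow> F \<subseteq> {1..n}"
  using filters_sub by blast

lemma filter_up: "F \<in> filters n \<Longrightarrow> a \<in> F \<Longrightarrow> b \<in> {1..n} \<Longrightarrow> xi_le n a b \<Longrightarrow> b \<in> F"
  unfolding filters_def is_filter_def by blast

lemma filterI: "F \<subseteq> {1..n} \<Longrightarrow> (\<And>a b. a \<in> F \<Longrightarrow> b \<in> {1..n} \<Longrightarrow> xi_le n a b \<Longrightarrow> b \<in> F) \<Longrightarrow> F \<in> filters n"
  unfolding filters_def is_filter_def by blast

lemma mins_iff:
  assumes F: "F \<in> filters n"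
  shows "a \<in> mins n F \<longleftrightarrow> a \<in> F \<and> (\<forall>c\<in>F. xi_le n c a \<longrightarrow> c = a)"
proof
  assume "a \<in> mins n F"
  then have aF: "a \<in> F" and Fa: "F - {a} \<in> filters n" unfolding mins_def by auto
  have "c = a" if "c \<in> F" "xi_le n c a" for c
  proof (rule ccontr)
    assume "c \<noteq> a"
    then have "c \<in> F - {a}" using that by blast
    moreover have "a \<in> {1..n}" using aF filter_sub[OF F] by blast
    ultimately have "a \<in> F - {a}" using filter_up[OF Fa] that(2) by blast
    then show False by blast
  qed
  then show "a \<in> F \<and> (\<forall>c\<in>F. xi_le n c a \<longrightarrow> c = a)" using aF by blast
next
  assume H: "a \<in> F \<and> (\<forall>c\<in>F. xi_le n c a \<longrightarrow> c = a)"
  have "F - {a} \<in> filters n"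
  proof (rule filterI)
    show "F - {a} \<subseteq> {1..n}" using filter_sub[OF F] by blast
  next
    fix c b assume "c \<in> F - {a}" "b \<in> {1..n}" "xi_le n c b"
    then show "b \<in> F - {a}" using filter_up[OF F] H by blast
  qed
  then show "a \<in> mins n F" unfolding mins_def using H by blast
qed

lemma mins_sub: "mins n F \<subseteq> F" unfolding mins_def by blast

lemma mins_subset_iff:
  assumes F: "F \<in> filters n"
  shows "L \<subseteq> mins n F \<longleftrightarrow> L \<subseteq> F \<and> (\<forall>B. B \<subseteq> L \<longrightarrow> F - B \<in> filters n)"
proof
  assume L: "L \<subseteq> mins n F"
  have "F - B \<in> filters n" if "B \<subseteq> L" for B
  proof (rule filterI)
    show "F - B \<subseteq> {1..n}" using filter_sub[OF F] by blast
  next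
    fix c b assume cb: "c \<in> F - B" "b \<in> {1..n}" "xi_le n c b"
    then have "b \<in> F" using filter_up[OF F] by blast
    moreover have "b \<notin> B"
    proof
      assume "b \<in> B"
      then have "b \<in> mins n F" using L that by blast
      then have "c = b" using mins_iff[OF F] cb by blast
      then show False using cb \<open>b \<in> B\<close> by blast
    qed
    ultimately show "b \<in> F - B" by blast
  qed
  moreover have "L \<subseteq> F" using L mins_sub by blast
  ultimately show "L \<subseteq> F \<and> (\<forall>B. B \<subseteq> L \<longrightarrow> F - B \<in> filters n)" by simp
next
  assume "L \<subseteq> F \<and> (\<forall>B. B \<subseteq> L \<longrightarrow> F - B \<in> filters n)"
  then show "L \<subseteq> mins n F" unfolding mins_def by auto
qed

lemma set_adj_card: "finite (sd X V) \<Longrightarrow> set_adj X V \<longleftrightarrow> card (sd X V) = 1"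
  unfolding set_adj_sd using card_1_singleton_iff by (metis One_nat_def)

lemma sd_image: "inj_on g U \<Longrightarrow> X \<subseteq> U \<Longrightarrow> V \<subseteq> U \<Longrightarrow> sd (g ` X) (g ` V) = g ` (sd X V)"
  unfolding sd_def inj_on_def by blast

lemma sd_compl: "X \<subseteq> G \<Longrightarrow> V \<subseteq> G \<Longrightarrow> sd (G - X) (G - V) = sd X V"
  unfolding sd_def by blast

lemma induces_cube_iff:
  "induces_cube n k S \<longleftrightarrow>
     (\<exists>G L. G \<in> filters n \<and> L \<subseteq> mins n G \<and> card L = k \<and> S = (\<lambda>B. G - B) ` Pow L)"
proof
  assume "induces_cube n k S"
  then have Sf: "S \<subseteq> filters n" and ex: "\<exists>f. bij_betw f (Pow {..<k}) S \<and>
          (\<forall>A\<in>Pow {..<k}. \<forall>B\<in>Pow {..<k}. set_adj A B \<longleftrightarrow> set_adj (f A) (f B))"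
    unfolding induces_cube_def by (simp_all only:)
  from ex obtain f where fH: "bij_betw f (Pow {..<k}) S \<and>
          (\<forall>A\<in>Pow {..<k}. \<forall>B\<in>Pow {..<k}. set_adj A B \<longleftrightarrow> set_adj (f A) (f B))" ..
  have bf: "bij_betw f (Pow {..<k}) S" using fH by (rule conjunct1)
  have af: "\<forall>A\<in>Pow {..<k}. \<forall>B\<in>Pow {..<k}. set_adj A B \<longleftrightarrow> set_adj (f A) (f B)"
    using fH by (rule conjunct2)
  have injf: "inj_on f (Pow {..<k})" using bf by (simp add: bij_betw_def)
  have adjf: "set_adj (f A) (f B)" if "A \<subseteq> {..<k}" "B \<subseteq> {..<k}" "set_adj A B" for A B
    using af[rule_format, of A B] that by simp
  have "\<exists>l. inj_on l {..<k} \<and> (\<forall>A. A \<subseteq> {..<k} \<longrightarrow> f A = sd (f {}) (l ` A))"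
    using cube_struct[OF finite_lessThan[of k] injf adjf] .
  then obtain l where il: "inj_on l {..<k}" and fl: "\<And>A. A \<subseteq> {..<k} \<Longrightarrow> f A = sd (f {}) (l ` A)"
    by blast
  define X0 where "X0 = f {}"
  define L where "L = l ` {..<k}"
  define G where "G = X0 \<union> L"
  have cL: "card L = k" unfolding L_def using il by (simp add: card_image)
  have S1: "S = (\<lambda>C. sd X0 C) ` Pow L"
  proof -
    have "S = f ` Pow {..<k}" using bf by (simp add: bij_betw_def)
    also have "\<dots> = (\<lambda>A. sd X0 (l ` A)) ` Pow {..<k}"
    proof (rule image_cong)
      show "f A = sd X0 (l ` A)" if "A \<in> Pow {..<k}" for A
        using fl[of A] that unfolding X0_def by blast
    qed simp
    also have "\<dots> = (\<lambda>C. sd X0 C) ` ((\<lambda>A. l ` A) ` Pow {..<k})" by (simp add: image_image)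
    also have "(\<lambda>A. l ` A) ` Pow {..<k} = Pow L"
      unfolding L_def by (auto simp: subset_image_iff)
    finally show ?thesis .
  qed
  define phi where "phi C = (C \<inter> X0) \<union> (L - X0 - C)" for C
  have phiL: "C \<subseteq> L \<Longrightarrow> phi C \<subseteq> L" for C unfolding phi_def by auto
  have phi2: "C \<subseteq> L \<Longrightarrow> phi (phi C) = C" for C unfolding phi_def by auto
  have sdphi: "C \<subseteq> L \<Longrightarrow> sd X0 C = G - phi C" for C unfolding phi_def G_def sd_def by auto
  have S2: "S = (\<lambda>B. G - B) ` Pow L"
  proof -
    have "(\<lambda>C. sd X0 C) ` Pow L = (\<lambda>B. G - B) ` Pow L"
    proof
      show "(\<lambda>C. sd X0 C) ` Pow L \<subseteq> (\<lambda>B. G - B) ` Pow L"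
      proof
        fix Z assume "Z \<in> (\<lambda>C. sd X0 C) ` Pow L"
        then obtain C where C: "C \<subseteq> L" "Z = sd X0 C" by auto
        then have "Z = G - phi C" using sdphi by simp
        moreover have "phi C \<in> Pow L" using phiL[OF C(1)] by simp
        ultimately show "Z \<in> (\<lambda>B. G - B) ` Pow L" by (rule image_eqI)
      qed
      show "(\<lambda>B. G - B) ` Pow L \<subseteq> (\<lambda>C. sd X0 C) ` Pow L"
      proof
        fix Z assume "Z \<in> (\<lambda>B. G - B) ` Pow L"
        then obtain B where B: "B \<subseteq> L" "Z = G - B" by auto
        then have "Z = sd X0 (phi B)" using sdphi[of "phi B"] phiL phi2 by simp
        moreover have "phi B \<in> Pow L" using phiL[OF B(1)] by simp
        ultimately show "Z \<in> (\<lambda>C. sd X0 C) ` Pow L" by (rule image_eqI)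
      qed
    qed
    then show ?thesis using S1 by simp
  qed
  have GS: "G \<in> S" using S2 by blast
  have LG: "L \<subseteq> G" unfolding G_def by blast
  have Gf: "G \<in> filters n" using GS Sf by blast
  have "\<forall>B. B \<subseteq> L \<longrightarrow> G - B \<in> filters n"
  proof (intro allI impI)
    fix B assume "B \<subseteq> L"
    then have "G - B \<in> S" unfolding S2 by blast
    then show "G - B \<in> filters n" using Sf by blast
  qed
  then have "L \<subseteq> mins n G"
    using iffD2[OF mins_subset_iff[OF Gf]] LG by blast
  then show "\<exists>G L. G \<in> filters n \<and> L \<subseteq> mins n G \<and> card L = k \<and> S = (\<lambda>B. G - B) ` Pow L"
    using Gf cL S2 by (intro exI[of _ G] exI[of _ L]) simp
next
  assume "\<exists>G L. G \<in> filters n \<and> L \<subseteq> mins n G \<and> card L = k \<and> S = (\<lambda>B. G - B) ` Pow L"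
  then obtain G L where G: "G \<in> filters n" and L: "L \<subseteq> mins n G" and cL: "card L = k"
    and S: "S = (\<lambda>B. G - B) ` Pow L" by blast
  have H: "L \<subseteq> G \<and> (\<forall>B. B \<subseteq> L \<longrightarrow> G - B \<in> filters n)"
    using iffD1[OF mins_subset_iff[OF G] L] .
  have LG: "L \<subseteq> G" using H by (rule conjunct1)
  have GB: "G - B \<in> filters n" if "B \<subseteq> L" for B using H that by simp
  have finG: "finite G" using filter_sub[OF G] finite_subset by blast
  have finL: "finite L" using LG finG finite_subset by blast
  obtain g where bg: "bij_betw g {0..<k} L" using ex_bij_betw_nat_finite[OF finL] cL by blast
  then have bg': "bij_betw g {..<k} L" by (simp add: atLeast0LessThan)
  have ig: "inj_on g {..<k}" using bg' by (simp add: bij_betw_def)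
  have gimg: "g ` {..<k} = L" using bg' by (simp add: bij_betw_def)
  define f where "f A = G - g ` A" for A
  have b1: "bij_betw (image g) (Pow {..<k}) (Pow L)" using bij_betw_Pow[OF bg'] .
  have b2: "bij_betw (\<lambda>B. G - B) (Pow L) S"
    unfolding S bij_betw_def
  proof
    show "inj_on (\<lambda>B. G - B) (Pow L)"
    proof (rule inj_onI)
      fix B1 B2 assume "B1 \<in> Pow L" "B2 \<in> Pow L" "G - B1 = G - B2"
      then show "B1 = B2" using LG by blast
    qed
  qed simp
  have bf: "bij_betw f (Pow {..<k}) S"
    unfolding f_def using bij_betw_trans[OF b1 b2] by (simp add: comp_def)
  have Sf: "S \<subseteq> filters n" using S GB by blast
  have adj: "set_adj A B \<longleftrightarrow> set_adj (f A) (f B)" if "A \<subseteq> {..<k}" "B \<subseteq> {..<k}" for A B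
  proof -
    have gA: "g ` A \<subseteq> G" "g ` B \<subseteq> G" using that gimg LG by blast+
    have "sd (f A) (f B) = g ` (sd A B)"
      unfolding f_def using sd_compl[OF gA] sd_image[OF ig that] by simp
    moreover have "finite (sd A B)" using that finite_subset[of "sd A B" "{..<k}"]
      unfolding sd_def by blast
    moreover have "sd A B \<subseteq> {..<k}" using that unfolding sd_def by blast
    then have "inj_on g (sd A B)" using inj_on_subset[OF ig] by blast
    ultimately show ?thesis using set_adj_card[of A B] set_adj_card[of "f A" "f B"]
      by (simp add: card_image)
  qed
  show "induces_cube n k S" unfolding induces_cube_def using Sf bf adj by blast
qed

lemma U_img: "L \<subseteq> G \<Longrightarrow> \<Union>((\<lambda>B. G - B) ` Pow L) = G"
proof
  show "\<Union>((\<lambda>B. G - B) ` Pow L) \<subseteq> G" by blast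
  show "G \<subseteq> \<Union>((\<lambda>B. G - B) ` Pow L)"
  proof
    fix x assume "x \<in> G"
    moreover have "G - {} \<in> (\<lambda>B. G - B) ` Pow L" by blast
    ultimately show "x \<in> \<Union>((\<lambda>B. G - B) ` Pow L)" by blast
  qed
qed

lemma I_img: "L \<subseteq> G \<Longrightarrow> \<Inter>((\<lambda>B. G - B) ` Pow L) = G - L"
proof
  show "\<Inter>((\<lambda>B. G - B) ` Pow L) \<subseteq> G - L"
  proof
    fix x assume "x \<in> \<Inter>((\<lambda>B. G - B) ` Pow L)"
    moreover have "G - L \<in> (\<lambda>B. G - B) ` Pow L" by blast
    ultimately show "x \<in> G - L" by blast
  qed
  show "G - L \<subseteq> \<Inter>((\<lambda>B. G - B) ` Pow L)" by blast
qed

lemma q_sum: "q n k = (\<Sum>G\<in>filters n. card (mins n G) choose k)"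
proof -
  define P where "P = Sigma (filters n) (\<lambda>G. {L. L \<subseteq> mins n G \<and> card L = k})"
  define Phi :: "nat set \<times> nat set \<Rightarrow> nat set set" where "Phi = (\<lambda>(G,L). (\<lambda>B. G - B) ` Pow L)"
  have seteq: "{S. induces_cube n k S} = Phi ` P"
  proof
    show "{S. induces_cube n k S} \<subseteq> Phi ` P"
    proof
      fix S assume "S \<in> {S. induces_cube n k S}"
      then obtain G L where "G \<in> filters n" "L \<subseteq> mins n G" "card L = k" "S = (\<lambda>B. G - B) ` Pow L"
        using induces_cube_iff by auto
      then show "S \<in> Phi ` P" unfolding P_def Phi_def by (intro image_eqI[of _ _ "(G,L)"]) auto
    qed
    show "Phi ` P \<subseteq> {S. induces_cube n k S}"
    proof
      fix S assume "S \<in> Phi ` P"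
      then obtain G L where "G \<in> filters n" "L \<subseteq> mins n G" "card L = k" "S = (\<lambda>B. G - B) ` Pow L"
        unfolding P_def Phi_def by auto
      then show "S \<in> {S. induces_cube n k S}" using induces_cube_iff by blast
    qed
  qed
  have inj: "inj_on Phi P"
  proof (rule inj_onI)
    fix x y assume "x \<in> P" "y \<in> P" and e: "Phi x = Phi y"
    obtain G L where x: "x = (G,L)" and LG: "L \<subseteq> G"
      using \<open>x \<in> P\<close> mins_sub unfolding P_def by force
    obtain G' L' where y: "y = (G',L')" and LG': "L' \<subseteq> G'"
      using \<open>y \<in> P\<close> mins_sub unfolding P_def by force
    have e': "(\<lambda>B. G - B) ` Pow L = (\<lambda>B. G' - B) ` Pow L'" using e x y unfolding Phi_def by simp
    have "G = G'" using U_img[OF LG] U_img[OF LG'] e' by simp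
    moreover have "G - L = G' - L'" using I_img[OF LG] I_img[OF LG'] e' by simp
    ultimately have "L = L'" using LG LG' by blast
    then show "x = y" using x y \<open>G = G'\<close> by simp
  qed
  have fin: "finite {L. L \<subseteq> mins n G \<and> card L = k}" if "G \<in> filters n" for G
  proof -
    have "finite (mins n G)" using filter_sub[OF that] mins_sub finite_subset
      by (metis finite_atLeastAtMost)
    then show ?thesis by simp
  qed
  have "q n k = card (Phi ` P)" unfolding q_def seteq ..
  also have "\<dots> = card P" using inj by (rule card_image)
  also have "\<dots> = (\<Sum>G\<in>filters n. card {L. L \<subseteq> mins n G \<and> card L = k})"
    unfolding P_def using finite_filters fin by (simp add: card_SigmaI)
  also have "\<dots> = (\<Sum>G\<in>filters n. card (mins n G) choose k)"
  proof (rule sum.cong)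
    fix G assume "G \<in> filters n"
    have "finite (mins n G)" using filter_sub[OF \<open>G \<in> filters n\<close>] mins_sub finite_subset
      by (metis finite_atLeastAtMost)
    then show "card {L. L \<subseteq> mins n G \<and> card L = k} = card (mins n G) choose k"
      by (rule n_subsets)
  qed simp
  finally show ?thesis .
qed

definition antichain :: "nat \<Rightarrow> nat set \<Rightarrow> bool" where
  "antichain n A \<longleftrightarrow> A \<subseteq> {1..n} \<and> (\<forall>a\<in>A. \<forall>c\<in>A. xi_le n c a \<longrightarrow> c = a)"

definition up :: "nat \<Rightarrow> nat set \<Rightarrow> nat set" where
  "up n A = {b \<in> {1..n}. \<exists>a\<in>A. xi_le n a b}"

lemma mins_antichain: "F \<in> filters n \<Longrightarrow> antichain n (mins n F)"
  unfolding antichain_def using mins_iff[of F n] filter_sub[of F n] mins_sub[of n F] by blast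

lemma exists_min: "F \<in> filters n \<Longrightarrow> b \<in> F \<Longrightarrow> \<exists>a\<in>mins n F. xi_le n a b"
proof (induction "hr b" arbitrary: b rule: less_induct)
  case less
  show ?case
  proof (cases "b \<in> mins n F")
    case True then show ?thesis using xi_le_refl by blast
  next
    case False
    then obtain c where c: "c \<in> F" "xi_le n c b" "c \<noteq> b" using mins_iff[OF less.prems(1)] less.prems(2) by blast
    then have "hr c < hr b" using xi_le_hr by blast
    then obtain a where "a \<in> mins n F" "xi_le n a c" using less.hyps[of c] less.prems(1) c(1) by blast
    then show ?thesis using xi_le_trans c(2) by blast
  qed
qed

lemma up_mins: "F \<in> filters n \<Longrightarrow> up n (mins n F) = F"
proof
  assume F: "F \<in> filters n"
  show "up n (mins n F) \<subseteq> F"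
    unfolding up_def using filter_up[OF F] mins_sub by blast
  show "F \<subseteq> up n (mins n F)"
    unfolding up_def using exists_min[OF F] filter_sub[OF F] by blast
qed

lemma up_filter: "antichain n A \<Longrightarrow> up n A \<in> filters n"
proof (rule filterI)
  show "up n A \<subseteq> {1..n}" unfolding up_def by blast
next
  fix a b assume "a \<in> up n A" "b \<in> {1..n}" "xi_le n a b"
  then show "b \<in> up n A" unfolding up_def using xi_le_trans by blast
qed

lemma mins_up: assumes A: "antichain n A" shows "mins n (up n A) = A"
proof
  have U: "up n A \<in> filters n" using up_filter[OF A] .
  show "mins n (up n A) \<subseteq> A"
  proof
    fix a assume "a \<in> mins n (up n A)"
    then have a: "a \<in> up n A" "\<forall>c\<in>up n A. xi_le n c a \<longrightarrow> c = a" using mins_iff[OF U] by blast+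
    then obtain a' where a': "a' \<in> A" "xi_le n a' a" unfolding up_def by blast
    have "a' \<in> up n A" using a' A xi_le_refl unfolding up_def antichain_def by blast
    then have "a' = a" using a(2) a'(2) by blast
    then show "a \<in> A" using a' by blast
  qed
  show "A \<subseteq> mins n (up n A)"
  proof
    fix a assume aA: "a \<in> A"
    then have aU: "a \<in> up n A" using A xi_le_refl unfolding up_def antichain_def by blast
    have "c = a" if cU: "c \<in> up n A" and ca: "xi_le n c a" for c
    proof -
      obtain a' where a': "a' \<in> A" "xi_le n a' c" using cU unfolding up_def by blast
      then have "xi_le n a' a" using ca xi_le_trans by blast
      then have "a' = a" using A a'(1) aA unfolding antichain_def by blast
      then show "c = a" using a'(2) ca xi_le_antisym by blast
    qed
    then show "a \<in> mins n (up n A)" using mins_iff[OF U] aU by blast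
  qed
qed

lemma card_filters_mins:
  "card {F \<in> filters n. card (mins n F) = j} = card {A. antichain n A \<and> card A = j}"
proof (rule bij_betw_same_card[of "mins n"], rule bij_betw_byWitness[of _ "up n"])
  show "\<forall>a\<in>{F \<in> filters n. card (mins n F) = j}. up n (mins n a) = a" using up_mins by blast
  show "\<forall>a'\<in>{A. antichain n A \<and> card A = j}. mins n (up n a') = a'" using mins_up by blast
  show "mins n ` {F \<in> filters n. card (mins n F) = j} \<subseteq> {A. antichain n A \<and> card A = j}"
    using mins_antichain by blast
  show "up n ` {A. antichain n A \<and> card A = j} \<subseteq> {F \<in> filters n. card (mins n F) = j}"
    using up_filter mins_up by auto
qed

definition indep :: "nat \<Rightarrow> nat set \<Rightarrow> bool" where
  "indep n A \<longleftrightarrow> A \<subseteq> {1..n} \<and> (\<forall>a\<in>A. Suc a \<notin> A) \<and> \<not> (1 \<in> A \<and> 3 \<in> A)"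

lemma antichain_indep: "antichain n A \<longleftrightarrow> indep n A"
proof
  assume A: "antichain n A"
  have sub: "A \<subseteq> {1..n}" using A unfolding antichain_def by blast
  have nc: "\<not> (xi_le n a b \<or> xi_le n b a)" if "a \<in> A" "b \<in> A" "a \<noteq> b" for a b
    using A that unfolding antichain_def by blast
  have "Suc a \<notin> A" if "a \<in> A" for a
  proof
    assume "Suc a \<in> A"
    then have "a \<in> {1..n}" "Suc a \<in> {1..n}" using sub that by blast+
    then have "xi_le n a (Suc a) \<or> xi_le n (Suc a) a"
      using comparable_iff[of a n "Suc a"] by simp
    then show False using nc[of a "Suc a"] that \<open>Suc a \<in> A\<close> by simp
  qed
  moreover have "\<not> (1 \<in> A \<and> 3 \<in> A)"
  proof
    assume h: "1 \<in> A \<and> 3 \<in> A"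
    then have "1 \<in> {1..n}" "3 \<in> {1..n}" using sub by blast+
    then have "xi_le n 1 3 \<or> xi_le n 3 1"
      using comparable_iff[of 1 n 3] by simp
    then show False using nc[of 1 3] h by simp
  qed
  ultimately show "indep n A" using sub unfolding indep_def by blast
next
  assume I: "indep n A"
  have sub: "A \<subseteq> {1..n}" using I unfolding indep_def by blast
  have "c = a" if "a \<in> A" "c \<in> A" "xi_le n c a" for a c
  proof (rule ccontr)
    assume "c \<noteq> a"
    moreover have "c \<in> {1..n}" "a \<in> {1..n}" using sub that by blast+
    ultimately have "c = a + 1 \<or> a = c + 1 \<or> (c = 1 \<and> a = 3) \<or> (c = 3 \<and> a = 1)"
      using comparable_iff[of c n a] that(3) by blast
    then show False using I that unfolding indep_def by auto
  qed
  then show "antichain n A" using sub unfolding antichain_def by blast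
qed

definition Icnt :: "nat \<Rightarrow> nat \<Rightarrow> nat" where
  "Icnt n j = card {A. indep n A \<and> card A = j}"

lemma indep_fin: "indep n A \<Longrightarrow> finite A"
  unfolding indep_def using finite_subset by blast

lemma indep_set_fin: "finite {A. indep n A \<and> P A}"
proof (rule finite_subset[of _ "Pow {1..n}"])
  show "{A. indep n A \<and> P A} \<subseteq> Pow {1..n}" unfolding indep_def by blast
qed simp

lemma Icnt0: "Icnt m 0 = 1"
proof -
  have "{A. indep m A \<and> card A = 0} = {{}}"
  proof
    show "{A. indep m A \<and> card A = 0} \<subseteq> {{}}" using indep_fin by fastforce
    show "{{}} \<subseteq> {A. indep m A \<and> card A = 0}" unfolding indep_def by simp
  qed
  then show ?thesis unfolding Icnt_def by simp
qed

lemma Icnt1: "Icnt m 1 = m"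
proof -
  have "{A. indep m A \<and> card A = 1} = (\<lambda>x. {x}) ` {1..m}"
  proof
    show "{A. indep m A \<and> card A = 1} \<subseteq> (\<lambda>x. {x}) ` {1..m}"
    proof
      fix A assume "A \<in> {A. indep m A \<and> card A = 1}"
      then have "indep m A" "card A = Suc 0" by auto
      then obtain x where "A = {x}" by (auto simp: card_1_singleton_iff)
      moreover have "x \<in> {1..m}" using \<open>indep m A\<close> \<open>A = {x}\<close> unfolding indep_def by blast
      ultimately show "A \<in> (\<lambda>x. {x}) ` {1..m}" by blast
    qed
    show "(\<lambda>x. {x}) ` {1..m} \<subseteq> {A. indep m A \<and> card A = 1}"
    proof
      fix A assume "A \<in> (\<lambda>x. {x}) ` {1..m}"
      then obtain x where x: "x \<in> {1..m}" "A = {x}" by blast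
      then show "A \<in> {A. indep m A \<and> card A = 1}" unfolding indep_def by simp
    qed
  qed
  moreover have "inj_on (\<lambda>x. {x}) {1..m}" by (rule inj_onI) simp
  ultimately show ?thesis unfolding Icnt_def by (simp add: card_image)
qed

lemma Icnt_small:
  assumes "n \<le> 3" "2 \<le> j" shows "Icnt n j = 0"
proof -
  have E: "{A. indep n A \<and> card A = j} = {}"
  proof (rule ccontr)
    assume "{A. indep n A \<and> card A = j} \<noteq> {}"
    then obtain A where A: "indep n A" "card A = j" by blast
    have "\<not> card A \<le> Suc 0" using A assms by simp
    then obtain a b where ab: "a \<in> A" "b \<in> A" "a \<noteq> b"
      using card_le_Suc0_iff_eq[OF indep_fin[OF A(1)]] by blast
    have "a \<in> {1..3}" "b \<in> {1..3}" using ab A(1) assms(1) unfolding indep_def by auto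
    then have "a \<in> {1,2,3}" "b \<in> {1,2,3}" by auto
    then show False using ab A(1) unfolding indep_def by (auto simp: numeral_2_eq_2 numeral_3_eq_3)
  qed
  show ?thesis unfolding Icnt_def E by simp
qed

lemma Icnt_rec:
  assumes n: "2 \<le> n"
  shows "Icnt (n + 2) (Suc j) = Icnt (n + 1) (Suc j) + Icnt n j"
proof -
  define X where "X = {A. indep (n + 1) A \<and> card A = Suc j}"
  define Z where "Z = {A. indep n A \<and> card A = j}"
  have eq: "{A. indep (n + 2) A \<and> card A = Suc j} = X \<union> insert (n + 2) ` Z"
  proof
    show "{A. indep (n + 2) A \<and> card A = Suc j} \<subseteq> X \<union> insert (n + 2) ` Z"
    proof
      fix A assume "A \<in> {A. indep (n + 2) A \<and> card A = Suc j}"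
      then have A: "indep (n + 2) A" "card A = Suc j" by auto
      have fA: "finite A" using indep_fin[OF A(1)] .
      show "A \<in> X \<union> insert (n + 2) ` Z"
      proof (cases "n + 2 \<in> A")
        case False
        have "A \<subseteq> {1..n+1}"
        proof
          fix x assume "x \<in> A"
          then have "x \<in> {1..n+2}" using A(1) unfolding indep_def by blast
          then show "x \<in> {1..n+1}" using False \<open>x \<in> A\<close> by (cases "x = n + 2") auto
        qed
        then have "indep (n + 1) A" using A(1) unfolding indep_def by blast
        then show ?thesis unfolding X_def using A(2) by blast
      next
        case True
        have n1: "n + 1 \<notin> A" using A(1) True unfolding indep_def by auto
        define B where "B = A - {n + 2}"
        have "B \<subseteq> {1..n}"
        proof
          fix x assume "x \<in> B"
          then have "x \<in> {1..n+2}" "x \<noteq> n + 2" "x \<in> A" using A(1) unfolding indep_def B_def by blast+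
          then show "x \<in> {1..n}" using n1 by (cases "x = n + 1") auto
        qed
        then have "indep n B" using A(1) unfolding indep_def B_def by blast
        moreover have "card B = j" using A(2) True fA unfolding B_def by simp
        moreover have "A = insert (n + 2) B" using True unfolding B_def by blast
        ultimately show ?thesis unfolding Z_def by blast
      qed
    qed
    show "X \<union> insert (n + 2) ` Z \<subseteq> {A. indep (n + 2) A \<and> card A = Suc j}"
    proof
      fix A assume "A \<in> X \<union> insert (n + 2) ` Z"
      then consider "A \<in> X" | B where "B \<in> Z" "A = insert (n + 2) B" by blast
      then show "A \<in> {A. indep (n + 2) A \<and> card A = Suc j}"
      proof cases
        case 1 then show ?thesis unfolding X_def indep_def by auto
      next
        case 2
        have B: "indep n B" "card B = j" using 2(1) unfolding Z_def by auto
        have nB: "n + 2 \<notin> B" using B(1) unfolding indep_def by auto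
        have "indep (n + 2) A"
          using B(1) n unfolding 2(2) indep_def by auto
        moreover have "card A = Suc j" using B(2) nB indep_fin[OF B(1)] unfolding 2(2) by simp
        ultimately show ?thesis by blast
      qed
    qed
  qed
  have disj: "X \<inter> insert (n + 2) ` Z = {}" unfolding X_def indep_def by auto
  have inj: "inj_on (insert (n + 2)) Z"
  proof (rule inj_onI)
    fix B1 B2 assume "B1 \<in> Z" "B2 \<in> Z" "insert (n + 2) B1 = insert (n + 2) B2"
    moreover have "n + 2 \<notin> B1" "n + 2 \<notin> B2" using \<open>B1 \<in> Z\<close> \<open>B2 \<in> Z\<close> unfolding Z_def indep_def by auto
    ultimately show "B1 = B2" by (metis insert_ident)
  qed
  have fX: "finite X" unfolding X_def by (rule indep_set_fin)
  have fZ: "finite Z" unfolding Z_def by (rule indep_set_fin)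
  have "Icnt (n + 2) (Suc j) = card (X \<union> insert (n + 2) ` Z)" unfolding Icnt_def eq ..
  also have "\<dots> = card X + card (insert (n + 2) ` Z)"
    using fX fZ disj by (simp add: card_Un_disjoint)
  also have "\<dots> = card X + card Z" using inj by (simp add: card_image)
  finally show ?thesis unfolding Icnt_def X_def Z_def .
qed

lemma Ynat: "Y a b = (a choose b) + (if b = 0 then (if a = 0 then 1 else 0)
    else if a = 0 then 0 else (a - 1) choose (b - 1))"
proof -
  have "binom (int a) (int b) = a choose b" unfolding binom_def by simp
  moreover have "binom (int a - 1) (int b - 1) = (if b = 0 then (if a = 0 then 1 else 0)
    else if a = 0 then 0 else (a - 1) choose (b - 1))"
    unfolding binom_def by (auto simp: nat_diff_distrib)
  ultimately show ?thesis unfolding Y_def by simp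
qed

lemma Y_rec:
  assumes "1 \<le> n"
  shows "Y (n + 2 - Suc j) (Suc j) = Y (n + 1 - Suc j) (Suc j) + Y (n - j) j"
proof (cases "j \<le> n")
  case True
  then obtain a where a: "n = j + a" using le_Suc_ex by blast
  have e1: "n + 2 - Suc j = Suc a" "n + 1 - Suc j = a" "n - j = a" using a by auto
  show ?thesis unfolding e1 Ynat
    by (cases a; cases j) (auto simp: binomial_Suc_Suc)
next
  case False
  then have e1: "n + 2 - Suc j = 0" "n + 1 - Suc j = 0" "n - j = 0" "j \<noteq> 0" using assms by auto
  show ?thesis unfolding e1(1-3) Ynat using e1(4) by simp
qed

lemma Icnt_Y: "2 \<le> n \<Longrightarrow> Icnt n j = Y (n - j) j"
proof (induction n arbitrary: j rule: less_induct)
  case (less n)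
  have "n = 2 \<or> n = 3 \<or> (2 \<le> n - 2 \<and> n = (n - 2) + 2)" using less.prems by arith
  then consider "n = 2" | "n = 3" | m where "n = m + 2" "2 \<le> m" by blast
  then show ?case
  proof cases
    case 1
    show ?thesis
    proof (cases "j \<le> 1")
      case True
      then have "j = 0 \<or> j = 1" by auto
      then show ?thesis using 1 Icnt0 Icnt1 by (auto simp: Ynat)
    next
      case False
      then have "Icnt n j = 0" using Icnt_small[of n j] 1 by simp
      moreover have "n - j = 0" using 1 False by simp
      ultimately show ?thesis using False by (simp add: Ynat)
    qed
  next
    case 2
    show ?thesis
    proof (cases "j \<le> 1")
      case True
      then have "j = 0 \<or> j = 1" by auto
      then show ?thesis using 2 Icnt0 Icnt1 by (auto simp: Ynat)
    next
      case False
      then have "Icnt n j = 0" using Icnt_small[of n j] 2 by simp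
      moreover have "n - j = 0 \<or> (n - j = 1 \<and> j = 2)" using 2 False by auto
      ultimately show ?thesis using False by (auto simp: Ynat)
    qed
  next
    case 3
    show ?thesis
    proof (cases j)
      case 0
      then show ?thesis using 3 Icnt0 by (simp add: Ynat)
    next
      case (Suc j')
      have "Icnt n j = Icnt (m + 1) (Suc j') + Icnt m j'" using Icnt_rec[OF 3(2)] 3(1) Suc by simp
      also have "\<dots> = Y (m + 1 - Suc j') (Suc j') + Y (m - j') j'"
        using less.IH[of "m + 1"] less.IH[of m] 3 by simp
      also have "\<dots> = Y (m + 2 - Suc j') (Suc j')" using Y_rec[of m j'] 3(2) by simp
      finally show ?thesis using 3(1) Suc by simp
    qed
  qed
qed

lemma card_mins_count: "card {F \<in> filters n. card (mins n F) = j} = Icnt n j"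
proof -
  have "{A. antichain n A \<and> card A = j} = {A. indep n A \<and> card A = j}"
    using antichain_indep by blast
  then show ?thesis using card_filters_mins[of n j] unfolding Icnt_def by simp
qed

lemma card_mins_le: "F \<in> filters n \<Longrightarrow> card (mins n F) \<le> n"
proof -
  assume F: "F \<in> filters n"
  have "mins n F \<subseteq> {1..n}" using filter_sub[OF F] mins_sub by blast
  then have "card (mins n F) \<le> card {1..n}" by (rule card_mono[rotated]) simp
  then show ?thesis by simp
qed

lemma q_formula:
  assumes n: "2 \<le> n"
  shows "q n k = (\<Sum>j\<le>n. Y (n - j) j * (j choose k))"
proof -
  have "q n k = (\<Sum>G\<in>filters n. card (mins n G) choose k)" by (rule q_sum)
  also have "\<dots> = (\<Sum>j\<le>n. \<Sum>G\<in>{G \<in> filters n. card (mins n G) = j}. card (mins n G) choose k)"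
  proof (rule sum.group[symmetric])
    show "finite (filters n)" by (rule finite_filters)
    show "finite {..n}" by simp
    show "(\<lambda>G. card (mins n G)) ` filters n \<subseteq> {..n}" using card_mins_le by auto
  qed
  also have "\<dots> = (\<Sum>j\<le>n. Y (n - j) j * (j choose k))"
  proof (rule sum.cong[OF refl])
    fix j assume "j \<in> {..n}"
    have "(\<Sum>G\<in>{G \<in> filters n. card (mins n G) = j}. card (mins n G) choose k)
        = (\<Sum>G\<in>{G \<in> filters n. card (mins n G) = j}. j choose k)"
      by (rule sum.cong) auto
    also have "\<dots> = card {G \<in> filters n. card (mins n G) = j} * (j choose k)" by simp
    also have "\<dots> = Y (n - j) j * (j choose k)" using card_mins_count Icnt_Y[OF n] by simp
    finally show "(\<Sum>G\<in>{G \<in> filters n. card (mins n G) = j}. card (mins n G) choose k)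
        = Y (n - j) j * (j choose k)" .
  qed
  finally show ?thesis .
qed

lemma Y_zero:
  assumes "1 \<le> n" "n div 2 < j" "j \<le> n"
  shows "Y (n - j) j = 0"
proof -
  have j0: "j \<noteq> 0" using assms by auto
  have lt: "n - j < j" using assms by auto
  have "(n - j) choose j = 0" using lt by simp
  moreover have "n - j = 0 \<or> (n - j - 1) choose (j - 1) = 0" using lt by auto
  ultimately show ?thesis unfolding Ynat using j0 by auto
qed

lemma q_formula2:
  assumes n: "2 \<le> n"
  shows "q n k = (\<Sum>j\<le>n div 2. Y (n - j) j * (j choose k))"
proof -
  have "(\<Sum>j\<le>n. Y (n - j) j * (j choose k)) = (\<Sum>j\<le>n div 2. Y (n - j) j * (j choose k))"
  proof (rule sum.mono_neutral_right)
    show "finite {..n}" by simp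
    show "{..n div 2} \<subseteq> {..n}" by auto
    show "\<forall>i\<in>{..n} - {..n div 2}. Y (n - i) i * (i choose k) = 0"
      using Y_zero n by auto
  qed
  then show ?thesis using q_formula[OF n] by simp
qed

lemma binom_pow_nth: "fps_nth ((1 + fps_X :: nat fps) ^ j) k = j choose k"
proof (induction j arbitrary: k)
  case 0 then show ?case by simp
next
  case (Suc j)
  have "(1 + fps_X :: nat fps) ^ Suc j = (1 + fps_X) ^ j + fps_X * (1 + fps_X) ^ j"
    by (simp add: algebra_simps)
  then have "fps_nth ((1 + fps_X :: nat fps) ^ Suc j) k = (j choose k) + (if k = 0 then 0 else j choose (k - 1))"
    using Suc by simp
  then show ?case by (cases k) simp_all
qed

theorem main_aux:
  fixes n :: nat
  assumes "n \<ge> 2"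
  shows "Qser n = (\<Sum>j\<le>n div 2. of_nat (Y (n - j) j) * (1 + fps_X) ^ j)"
proof (rule fps_ext)
  fix k
  have "fps_nth (Qser n) k = q n k" unfolding Qser_def by simp
  also have "\<dots> = (\<Sum>j\<le>n div 2. Y (n - j) j * (j choose k))" using q_formula2[OF assms] .
  also have "\<dots> = fps_nth (\<Sum>j\<le>n div 2. of_nat (Y (n - j) j) * (1 + fps_X) ^ j) k"
    unfolding fps_sum_nth by (simp add: binom_pow_nth)
  finally show "fps_nth (Qser n) k = fps_nth (\<Sum>j\<le>n div 2. of_nat (Y (n - j) j) * (1 + fps_X) ^ j) k" .
qed

theorem mainTheorem11:
  fixes n :: nat
  assumes "n \<ge> 2"
  shows "Qser n = (\<Sum>j\<le>n div 2. of_nat (Y (n - j) j) * (1 + fps_X) ^ j)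
       \<and> Qser n = (\<Sum>j\<le>n div 2. of_nat (binom (int (n - j)) (int j)
                                        + binom (int n - int j - 1) (int j - 1)) * (1 + fps_X) ^ j)"
proof
  show A: "Qser n = (\<Sum>j\<le>n div 2. of_nat (Y (n - j) j) * (1 + fps_X) ^ j)"
    using main_aux[OF assms] .
  have "(\<Sum>j\<le>n div 2. of_nat (Y (n - j) j) * (1 + fps_X) ^ j :: nat fps)
      = (\<Sum>j\<le>n div 2. of_nat (binom (int (n - j)) (int j)
                                        + binom (int n - int j - 1) (int j - 1)) * (1 + fps_X) ^ j)"
  proof (rule sum.cong[OF refl])
    fix j assume "j \<in> {..n div 2}"
    then have "j \<le> n" by auto
    then have "int (n - j) - 1 = int n - int j - 1" by simp
    then have "Y (n - j) j = binom (int (n - j)) (int j) + binom (int n - int j - 1) (int j - 1)"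
      unfolding Y_def by simp
    then show "of_nat (Y (n - j) j) * (1 + fps_X) ^ j = (of_nat (binom (int (n - j)) (int j)
                                        + binom (int n - int j - 1) (int j - 1)) * (1 + fps_X) ^ j :: nat fps)"
      by simp
  qed
  then show "Qser n = (\<Sum>j\<le>n div 2. of_nat (binom (int (n - j)) (int j)
                                        + binom (int n - int j - 1) (int j - 1)) * (1 + fps_X) ^ j)"
    using A by simp
qed

end
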